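(* Let $d\ge1$, $K\ge2$, $n\ge1$ be integers and let $(\mathbf W^\star,\mathbf H^\star)$ be an optimal solution of $$\min_{\mathbf W\in\mathrm{OB}(d,K),\ \mathbf H\in\mathrm{OB}(d,nK)}\ \mathcal L_{\mathrm{HardMax}}(\mathbf W,\mathbf H).$$ Then $\mathbf W^\star$ is a Softmax Code, i.e. $\mathbf W^\star\in\operatorname{argmax}_{\mathbf W\in\mathrm{OB}(d,K)}\rho_{\text{one-vs-rest}}(\mathbf W)$.
   Context: $\mathrm{OB}(d,m)$ is the set of real $d\times m$ matrices with unit-norm columns. $\mathbf W\in\mathrm{OB}(d,K)$ has columns $\mathbf w_1,\dots,\mathbf w_K$; $\mathbf H\in\mathrm{OB}(d,nK)$ has columns $\mathbf h_{k,i}$, $k\in[K],i\in[n]$. $\mathcal L_{\mathrm{HardMax}}(\mathbf W,\mathbf H)=\max_{k\in[K]}\max_{i\in[n]}\max_{k'\ne k}\langle \mathbf w_{k'}-\mathbf w_k,\mathbf h_{k,i}\rangle$. For a point $\mathbf v$ and a finite set $\mathcal W$, $\operatorname{dist}(\mathbf v,\mathcal W)=\inf\{\|\mathbf v-\mathbf w\|_2:\mathbf w\in\operatorname{conv}(\mathcal W)\}$. $\rho_{\text{one-vs-rest}}(\mathbf W)=\min_{k\in[K]}\operatorname{dist}(\mathbf w_k,\{\mathbf w_j\}_{j\in[K]\setminus\{k\}})$. A Softmax Code is any maximizer of $\rho_{\text{one-vs-rest}}$ over $\mathrm{OB}(d,K)$. *)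

theory Defs
  imports "HOL-Analysis.Analysis"
begin

text \<open>Vectors in R^d are elements of real^'d (d = CARD('d) >= 1).
  W in OB(d,K): family W k, k < K (0-based), of unit vectors.
  H in OB(d,nK): family H k i, k < K, i < n, of unit vectors.\<close>

definition OB_W :: "nat \<Rightarrow> (nat \<Rightarrow> real^'d) \<Rightarrow> bool" where
  "OB_W K W \<longleftrightarrow> (\<forall>k<K. norm (W k) = 1)"

definition OB_H :: "nat \<Rightarrow> nat \<Rightarrow> (nat \<Rightarrow> nat \<Rightarrow> real^'d) \<Rightarrow> bool" where
  "OB_H K n H \<longleftrightarrow> (\<forall>k<K. \<forall>i<n. norm (H k i) = 1)"

definition L_HardMax :: "nat \<Rightarrow> nat \<Rightarrow> (nat \<Rightarrow> real^'d) \<Rightarrow> (nat \<Rightarrow> nat \<Rightarrow> real^'d) \<Rightarrow> real" where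
  "L_HardMax K n W H =
     Max {inner (W k' - W k) (H k i) | k i k'. k < K \<and> i < n \<and> k' < K \<and> k' \<noteq> k}"

definition dist_conv :: "real^'d \<Rightarrow> (real^'d) set \<Rightarrow> real" where
  "dist_conv v S = (INF w \<in> convex hull S. norm (v - w))"

definition rho_ovr :: "nat \<Rightarrow> (nat \<Rightarrow> real^'d) \<Rightarrow> real" where
  "rho_ovr K W = Min {dist_conv (W k) (W ` ({..<K} - {k})) | k. k < K}"

end

theory Submission
  imports Defs
begin

lemma Lset_finite:
  fixes W :: "nat \<Rightarrow> real^'d" and H :: "nat \<Rightarrow> nat \<Rightarrow> real^'d" and K n :: nat
  shows   "finite {inner (W k' - W k) (H k i) | k i k'. k < K \<and> i < n \<and> k' < K \<and> k' \<noteq> k}"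
proof -
  have "{inner (W k' - W k) (H k i) | k i k'. k < K \<and> i < n \<and> k' < K \<and> k' \<noteq> k}
     \<subseteq> (\<lambda>(k,i,k'). inner (W k' - W k) (H k i)) ` ({..<K} \<times> {..<n} \<times> {..<K})"
    by force
  moreover have "finite ((\<lambda>(k,i,k'). inner (W k' - W k) (H k i)) ` ({..<K} \<times> {..<n} \<times> {..<K}))"
    by auto
  ultimately show ?thesis by (rule finite_subset)
qed

lemma L_ge:
  assumes "k < K" "i < n" "k' < K" "k' \<noteq> k"
  shows "inner (W k' - W k) (H k i) \<le> L_HardMax K n W H"
  unfolding L_HardMax_def
  by (rule Max_ge[OF Lset_finite]) (use assms in blast)

lemma L_le:
  assumes "K \<ge> 2" "n \<ge> 1"
    and "\<And>k i k'. k < K \<Longrightarrow> i < n \<Longrightarrow> k' < K \<Longrightarrow> k' \<noteq> k \<Longrightarrow> inner (W k' - W k) (H k i) \<le> c"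
  shows "L_HardMax K n W H \<le> c"
  unfolding L_HardMax_def
proof (rule Max.boundedI[OF Lset_finite])
  have "inner (W 1 - W 0) (H 0 0) \<in> {inner (W k' - W k) (H k i) | k i k'. k < K \<and> i < n \<and> k' < K \<and> k' \<noteq> k}"
    using assms(1,2) by (intro CollectI exI[of _ 0] exI[of _ "0::nat"] exI[of _ 1]) auto
  then show "{inner (W k' - W k) (H k i) | k i k'. k < K \<and> i < n \<and> k' < K \<and> k' \<noteq> k} \<noteq> {}" by blast
qed (use assms(3) in blast)

lemma lower:
  fixes w h :: "real^'d" and S :: "(real^'d) set"
  assumes "S \<noteq> {}" "norm h = 1" "\<And>s. s \<in> S \<Longrightarrow> inner (s - w) h \<le> c"
  shows "- c \<le> dist_conv w S"
  unfolding dist_conv_def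
proof (rule cINF_greatest)
  show "convex hull S \<noteq> {}" using assms(1) by simp
  fix v assume v: "v \<in> convex hull S"
  have "S \<subseteq> {x. inner h x \<le> c + inner h w}"
  proof
    fix x assume "x \<in> S"
    then have "inner (x - w) h \<le> c" by (rule assms(3))
    then show "x \<in> {x. inner h x \<le> c + inner h w}" by (simp add: inner_diff_left inner_diff_right inner_commute)
  qed
  then have "convex hull S \<subseteq> {x. inner h x \<le> c + inner h w}"
    by (rule hull_minimal) (rule convex_halfspace_le)
  with v have "inner h v \<le> c + inner h w" by auto
  then have "inner (v - w) h \<le> c" by (simp add: inner_diff_left inner_diff_right inner_commute)
  moreover have "- norm (v - w) \<le> inner (v - w) h"
    using Cauchy_Schwarz_ineq2[of "v - w" h] assms(2) by auto
  ultimately show "- c \<le> norm (w - v)" by (simp add: norm_minus_commute)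
qed

lemma upper:
  fixes w :: "real^'d" and S :: "(real^'d) set"
  assumes "finite S" "S \<noteq> {}" "norm w = 1" "\<And>s. s \<in> S \<Longrightarrow> norm s = 1"
  shows "\<exists>h. norm h = 1 \<and> (\<forall>s\<in>S. inner (s - w) h \<le> - dist_conv w S)"
proof -
  let ?C = "convex hull S"
  have cl: "closed ?C" by (intro compact_imp_closed compact_convex_hull finite_imp_compact assms(1))
  have ne: "?C \<noteq> {}" using assms(2) by simp
  define p where "p = closest_point ?C w"
  have pC: "p \<in> ?C" and pmin: "\<forall>y\<in>?C. dist w p \<le> dist w y"
    using closest_point_exists[OF cl ne] unfolding p_def by auto
  define \<delta> where "\<delta> = norm (w - p)"
  have dle: "dist_conv w S \<le> \<delta>"
    unfolding dist_conv_def \<delta>_def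
    by (rule cINF_lower[OF _ pC]) (auto intro: bdd_belowI[of _ 0])
  have key: "\<exists>h. norm h = 1 \<and> (\<forall>s\<in>S. inner (s - w) h \<le> - \<delta>)"
  proof (cases "\<delta> = 0")
    case True
    show ?thesis
    proof (intro exI conjI ballI)
      show "norm w = 1" by fact
      fix s assume "s \<in> S"
      then have "inner s w \<le> 1" using Cauchy_Schwarz_ineq2[of s w] assms(3,4) by auto
      then show "inner (s - w) w \<le> - \<delta>" using True assms(3)
        by (simp add: inner_diff_left dot_square_norm)
    qed
  next
    case False
    then have dpos: "\<delta> > 0" unfolding \<delta>_def by simp
    show ?thesis
    proof (intro exI conjI ballI)
      show "norm ((w - p) /\<^sub>R \<delta>) = 1" using dpos unfolding \<delta>_def by simp
      fix s assume s: "s \<in> S"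
      then have sC: "s \<in> ?C" by (simp add: hull_inc)
      have "inner (w - p) (s - p) \<le> 0"
        by (rule any_closest_point_dot[OF convex_convex_hull cl pC sC]) (use pmin in auto)
      moreover have dd: "\<delta> * \<delta> = inner (w - p) (w - p)"
        unfolding \<delta>_def by (simp add: dot_square_norm power2_eq_square)
      moreover have "inner (s - w) (w - p) = inner (s - p) (w - p) - inner (w - p) (w - p)"
        by (simp add: inner_diff_left inner_diff_right inner_commute algebra_simps)
      ultimately have "inner (s - w) (w - p) \<le> - (\<delta> * \<delta>)" by (simp add: inner_commute)
      then have "inner (s - w) (w - p) / \<delta> \<le> - (\<delta> * \<delta>) / \<delta>" using dpos
        by (intro divide_right_mono) auto
      also have "\<dots> = - \<delta>" using dpos by simp
      finally have "inner (s - w) (w - p) / \<delta> \<le> - \<delta>" .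
      then show "inner (s - w) ((w - p) /\<^sub>R \<delta>) \<le> - \<delta>" using dpos
        by (simp add: divide_inverse mult.commute)
    qed
  qed
  then show ?thesis using dle by force
qed

theorem mainTheorem2:
  fixes K n :: nat
    and Wopt :: "nat \<Rightarrow> real^'d"
    and Hopt :: "nat \<Rightarrow> nat \<Rightarrow> real^'d"
  assumes "K \<ge> 2" and "n \<ge> 1"
    and "OB_W K Wopt" and "OB_H K n Hopt"
    and "\<forall>(W::nat \<Rightarrow> real^'d) (H::nat \<Rightarrow> nat \<Rightarrow> real^'d). OB_W K W \<and> OB_H K n H \<longrightarrow> L_HardMax K n Wopt Hopt \<le> L_HardMax K n W H"
  shows "OB_W K Wopt \<and> (\<forall>W::nat \<Rightarrow> real^'d. OB_W K W \<longrightarrow> rho_ovr K W \<le> rho_ovr K Wopt)"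
proof (intro conjI allI impI)
  show "OB_W K Wopt" by fact
  fix W :: "nat \<Rightarrow> real^'d"
  assume W: "OB_W K W"
  have fin: "\<And>V :: nat \<Rightarrow> real^'d. finite {dist_conv (V k) (V ` ({..<K} - {k})) | k. k < K}"
    by simp
  have nem: "\<And>V :: nat \<Rightarrow> real^'d. {dist_conv (V k) (V ` ({..<K} - {k})) | k. k < K} \<noteq> {}"
  proof -
    fix V :: "nat \<Rightarrow> real^'d"
    have "dist_conv (V 0) (V ` ({..<K} - {0})) \<in> {dist_conv (V k) (V ` ({..<K} - {k})) | k. k < K}"
      using assms(1) by auto
    then show "{dist_conv (V k) (V ` ({..<K} - {k})) | k. k < K} \<noteq> {}" by blast
  qed
  have othne: "\<And>k. k < K \<Longrightarrow> {..<K} - {k} \<noteq> {}"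
  proof -
    fix k assume "k < K"
    show "{..<K} - {k} \<noteq> {}"
    proof (cases "k = 0")
      case True
      have "(1::nat) \<in> {..<K} - {k}" using True assms(1) by auto
      then show ?thesis by blast
    next
      case False
      have "(0::nat) \<in> {..<K} - {k}" using False \<open>k < K\<close> by auto
      then show ?thesis by blast
    qed
  qed
  have rle: "\<And>V :: nat \<Rightarrow> real^'d. \<And>k. k < K \<Longrightarrow> rho_ovr K V \<le> dist_conv (V k) (V ` ({..<K} - {k}))"
    unfolding rho_ovr_def by (rule Min_le[OF fin]) auto
  have "\<forall>k. \<exists>h. k < K \<longrightarrow> norm h = 1 \<and> (\<forall>s\<in>W ` ({..<K} - {k}). inner (s - W k) h \<le> - dist_conv (W k) (W ` ({..<K} - {k})))"
  proof
    fix k show "\<exists>h. k < K \<longrightarrow> norm h = 1 \<and> (\<forall>s\<in>W ` ({..<K} - {k}). inner (s - W k) h \<le> - dist_conv (W k) (W ` ({..<K} - {k})))"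
    proof (cases "k < K")
      case True
      show ?thesis using upper[of "W ` ({..<K} - {k})" "W k"] othne[OF True] W True
        unfolding OB_W_def by auto
    qed auto
  qed
  then obtain h where h: "\<And>k. k < K \<Longrightarrow> norm (h k) = 1 \<and> (\<forall>s\<in>W ` ({..<K} - {k}). inner (s - W k) (h k) \<le> - dist_conv (W k) (W ` ({..<K} - {k})))"
    by metis
  define H where "H = (\<lambda>k (i::nat). h k)"
  have HOB: "OB_H K n H" unfolding OB_H_def H_def using h by auto
  have LW: "L_HardMax K n W H \<le> - rho_ovr K W"
  proof (rule L_le[OF assms(1,2)])
    fix k i k' assume k: "k < K" "i < n" "k' < K" "k' \<noteq> k"
    have "inner (W k' - W k) (h k) \<le> - dist_conv (W k) (W ` ({..<K} - {k}))"
      using h[OF k(1)] k by auto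
    then show "inner (W k' - W k) (H k i) \<le> - rho_ovr K W"
      using rle[OF k(1), of W] unfolding H_def by linarith
  qed
  have Lopt: "- L_HardMax K n Wopt Hopt \<le> rho_ovr K Wopt"
  proof -
    have "rho_ovr K Wopt \<in> {dist_conv (Wopt k) (Wopt ` ({..<K} - {k})) | k. k < K}"
      unfolding rho_ovr_def by (rule Min_in[OF fin nem])
    then obtain k where k: "k < K" "rho_ovr K Wopt = dist_conv (Wopt k) (Wopt ` ({..<K} - {k}))"
      by blast
    have "- L_HardMax K n Wopt Hopt \<le> dist_conv (Wopt k) (Wopt ` ({..<K} - {k}))"
    proof (rule lower)
      show "Wopt ` ({..<K} - {k}) \<noteq> {}" using othne[OF k(1)] by simp
      show "norm (Hopt k 0) = 1" using assms(2,4) k(1) unfolding OB_H_def by auto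
      fix s assume "s \<in> Wopt ` ({..<K} - {k})"
      then obtain j where "j < K" "j \<noteq> k" "s = Wopt j" by auto
      then show "inner (s - Wopt k) (Hopt k 0) \<le> L_HardMax K n Wopt Hopt"
        using L_ge[of k K 0 n j Wopt Hopt] k(1) assms(2) by auto
    qed
    then show ?thesis using k(2) by simp
  qed
  have "L_HardMax K n Wopt Hopt \<le> L_HardMax K n W H" using assms(5) W HOB by blast
  then show "rho_ovr K W \<le> rho_ovr K Wopt" using LW Lopt by linarith
qed

end
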